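(* Suppose there exist constants $\epsilon,\kappa>0$ such that for all $\bm Z$ with $\mathrm{dist}(\bm Z,\mathcal W_G)\le\epsilon$ we have $\mathrm{dist}(\bm Z,\mathcal W_G)\le\kappa\|\nabla G(\bm Z)\|_F$. Then for all $\bm W$ with $\mathrm{dist}(\bm W,\mathcal W_F)\le\epsilon/\sqrt{\lambda_{\max}}$, $$\mathrm{dist}(\bm W,\mathcal W_F)\le\frac{\kappa\lambda}{\lambda_{\min}}\|\nabla F(\bm W)\|_F.$$
   Context: Let $L\ge2$, $d_0,\dots,d_L$ positive integers, $\bm Y\in\mathbb R^{d_L\times d_0}$, $\lambda_1,\dots,\lambda_L>0$, $\lambda=\prod_l\lambda_l$, $\lambda_{\min}=\min_l\lambda_l$, $\lambda_{\max}=\max_l\lambda_l$. For $\bm W=(\bm W_1,\dots,\bm W_L)$ with $\bm W_l\in\mathbb R^{d_l\times d_{l-1}}$: $F(\bm W)=\|\bm W_L\cdots\bm W_1-\bm Y\|_F^2+\sum_l\lambda_l\|\bm W_l\|_F^2$ and $G(\bm W)=\|\bm W_L\cdots\bm W_1-\sqrt\lambda\bm Y\|_F^2+\lambda\sum_l\|\bm W_l\|_F^2$; $\mathcal W_F$, $\mathcal W_G$ are the sets of critical points (zero gradient) of $F$, $G$. Distances and gradient norms use the Frobenius norm on tuples: $\mathrm{dist}(\bm W,\mathcal S)=\inf_{\bm V\in\mathcal S}(\sum_l\|\bm W_l-\bm V_l\|_F^2)^{1/2}$. *)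

theory Defs
  imports "HOL-Analysis.Analysis"
begin

text \<open>A tuple W = (W_1,...,W_L) with W_l a d_l x d_(l-1) real matrix is represented
  as a function W :: nat => nat => nat => real, where W l i j is entry (i,j) of W_l
  (0-based indices i < d l, j < d (l-1)); all entries outside the index set are 0.\<close>

type_synonym tup = "nat \<Rightarrow> nat \<Rightarrow> nat \<Rightarrow> real"

definition idx :: "nat \<Rightarrow> (nat \<Rightarrow> nat) \<Rightarrow> (nat \<times> nat \<times> nat) set" where
  "idx L d = {(l,i,j). 1 \<le> l \<and> l \<le> L \<and> i < d l \<and> j < d (l - 1)}"

definition valid :: "nat \<Rightarrow> (nat \<Rightarrow> nat) \<Rightarrow> tup \<Rightarrow> bool" where
  "valid L d W \<longleftrightarrow> (\<forall>l i j. (l,i,j) \<notin> idx L d \<longrightarrow> W l i j = 0)"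

fun mprod :: "(nat \<Rightarrow> nat) \<Rightarrow> tup \<Rightarrow> nat \<Rightarrow> nat \<Rightarrow> nat \<Rightarrow> real" where
  "mprod d W 0 i j = (if i = j \<and> i < d 0 then 1 else 0)"
| "mprod d W (Suc k) i j = (\<Sum>m<d k. W (Suc k) i m * mprod d W k m j)"

definition sqnorm :: "nat \<Rightarrow> (nat \<Rightarrow> nat) \<Rightarrow> nat \<Rightarrow> tup \<Rightarrow> real" where
  "sqnorm L d l W = (\<Sum>i<d l. \<Sum>j<d (l - 1). (W l i j)\<^sup>2)"

definition lossF :: "nat \<Rightarrow> (nat \<Rightarrow> nat) \<Rightarrow> (nat \<Rightarrow> nat \<Rightarrow> real) \<Rightarrow> (nat \<Rightarrow> real) \<Rightarrow> tup \<Rightarrow> real" where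
  "lossF L d Y lam W =
     (\<Sum>i<d L. \<Sum>j<d 0. (mprod d W L i j - Y i j)\<^sup>2) + (\<Sum>l=1..L. lam l * sqnorm L d l W)"

definition lossG :: "nat \<Rightarrow> (nat \<Rightarrow> nat) \<Rightarrow> (nat \<Rightarrow> nat \<Rightarrow> real) \<Rightarrow> (nat \<Rightarrow> real) \<Rightarrow> tup \<Rightarrow> real" where
  "lossG L d Y lam W =
     (let lm = (\<Prod>l=1..L. lam l) in
      (\<Sum>i<d L. \<Sum>j<d 0. (mprod d W L i j - sqrt lm * Y i j)\<^sup>2) + lm * (\<Sum>l=1..L. sqnorm L d l W))"

definition pdiff :: "(tup \<Rightarrow> real) \<Rightarrow> tup \<Rightarrow> nat \<Rightarrow> nat \<Rightarrow> nat \<Rightarrow> real" where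
  "pdiff f W l i j = deriv (\<lambda>t. f (\<lambda>a b c. W a b c + (if (a,b,c) = (l,i,j) then t else 0))) 0"

definition gradnorm :: "nat \<Rightarrow> (nat \<Rightarrow> nat) \<Rightarrow> (tup \<Rightarrow> real) \<Rightarrow> tup \<Rightarrow> real" where
  "gradnorm L d f W = sqrt (\<Sum>(l,i,j)\<in>idx L d. (pdiff f W l i j)\<^sup>2)"

definition crit :: "nat \<Rightarrow> (nat \<Rightarrow> nat) \<Rightarrow> (tup \<Rightarrow> real) \<Rightarrow> tup set" where
  "crit L d f = {W. valid L d W \<and> (\<forall>(l,i,j)\<in>idx L d. pdiff f W l i j = 0)}"

definition tdist :: "nat \<Rightarrow> (nat \<Rightarrow> nat) \<Rightarrow> tup \<Rightarrow> tup \<Rightarrow> real" where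
  "tdist L d W V = sqrt (\<Sum>(l,i,j)\<in>idx L d. (W l i j - V l i j)\<^sup>2)"

definition tdist_set :: "nat \<Rightarrow> (nat \<Rightarrow> nat) \<Rightarrow> tup \<Rightarrow> tup set \<Rightarrow> real" where
  "tdist_set L d W S = Inf (tdist L d W ` S)"

end

theory Submission
  imports Defs
begin

definition sc :: "nat \<Rightarrow> (nat \<Rightarrow> real) \<Rightarrow> nat \<Rightarrow> real" where
  "sc L lam a = (if 1 \<le> a \<and> a \<le> L then sqrt (lam a) else 1)"

definition Dm :: "nat \<Rightarrow> (nat \<Rightarrow> real) \<Rightarrow> tup \<Rightarrow> tup" where
  "Dm L lam W = (\<lambda>a b c. sc L lam a * W a b c)"

definition upd :: "tup \<Rightarrow> nat \<Rightarrow> nat \<Rightarrow> nat \<Rightarrow> real \<Rightarrow> tup" where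
  "upd W l i j t = (\<lambda>a b c. W a b c + (if (a,b,c) = (l,i,j) then t else 0))"

lemma pdiff_upd: "pdiff f W l i j = deriv (\<lambda>t. f (upd W l i j t)) 0"
  unfolding pdiff_def upd_def by simp

lemma sc_pos: assumes "\<forall>l\<in>{1..L}. lam l > 0" shows "sc L lam a > 0"
  using assms by (auto simp: sc_def)

lemma mprod_scale:
  "mprod d (\<lambda>a b c. s a * W a b c) k i j = (\<Prod>a=1..k. s a) * mprod d W k i j"
proof (induction k arbitrary: i j)
  case 0 then show ?case by simp
next
  case (Suc k)
  show ?case by (simp add: Suc sum_distrib_left mult.assoc mult.left_commute mult.commute)
qed

lemma sqrt_prod: "(\<Prod>a\<in>A. sqrt (f a)) = sqrt (\<Prod>a\<in>A. f a)"
  by (induction A rule: infinite_finite_induct) (auto simp: real_sqrt_mult)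

lemma mprod_diff:
  assumes "\<And>a b c. (\<lambda>t. f t a b c) differentiable at x"
  shows "(\<lambda>t. mprod d (f t) k i j) differentiable at x"
proof (induction k arbitrary: i j)
  case 0 then show ?case by simp
next
  case (Suc k)
  show ?case by (simp, intro differentiable_sum ballI differentiable_mult assms Suc, simp)
qed

lemma lossG_D:
  assumes lampos: "\<forall>l\<in>{1..L}. lam l > 0"
  shows "lossG L d Y lam (Dm L lam W) = (\<Prod>l=1..L. lam l) * lossF L d Y lam W"
proof -
  define lm where "lm = (\<Prod>l=1..L. lam l)"
  have lp: "\<And>a. a \<in> {1..L} \<Longrightarrow> lam a > 0" using lampos by blast
  have lm0: "lm \<ge> 0" unfolding lm_def by (intro prod_nonneg) (use lp in force)
  have ps: "(\<Prod>a=1..L. sc L lam a) = sqrt lm"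
    unfolding lm_def sqrt_prod[symmetric] by (intro prod.cong) (auto simp: sc_def)
  have mp: "mprod d (Dm L lam W) L i j = sqrt lm * mprod d W L i j" for i j
    unfolding Dm_def mprod_scale ps ..
  have sq: "sqnorm L d l (Dm L lam W) = lam l * sqnorm L d l W" if "l \<in> {1..L}" for l
  proof -
    have "sc L lam l ^ 2 = lam l" using that lp[OF that] by (auto simp: sc_def)
    then show ?thesis unfolding sqnorm_def Dm_def
      by (simp add: power_mult_distrib sum_distrib_left)
  qed
  have t1: "(sqrt lm * p - sqrt lm * y)\<^sup>2 = lm * (p - y)\<^sup>2" for p y
    using lm0 by (simp add: power_mult_distrib right_diff_distrib[symmetric])
  have sq2: "(\<Sum>l=1..L. sqnorm L d l (Dm L lam W)) = (\<Sum>l=1..L. lam l * sqnorm L d l W)"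
    by (rule sum.cong) (auto simp: sq)
  show ?thesis unfolding lossG_def lossF_def Let_def lm_def[symmetric] sq2
    by (simp add: mp t1 sum_distrib_left distrib_left mult.assoc cong: sum.cong)
qed

lemma Dm_upd: "Dm L lam (upd W l i j t) = upd (Dm L lam W) l i j (sc L lam l * t)"
  unfolding Dm_def upd_def by (auto simp: fun_eq_iff distrib_left)

lemma upd_diff: "(\<lambda>t. upd V l i j t a b c) differentiable at x"
  by (cases "a = l \<and> b = i \<and> c = j") (auto simp: upd_def)

lemma diffG: "(\<lambda>t. lossG L d Y lam (upd V l i j t)) differentiable at x"
proof -
  have "(\<lambda>t. mprod d (upd V l i j t) k a b) differentiable at x" for k a b
    by (rule mprod_diff) (rule upd_diff)
  moreover have "(\<lambda>t. sqnorm L d k (upd V l i j t)) differentiable at x" for k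
    unfolding sqnorm_def by (intro differentiable_sum ballI differentiable_power upd_diff) auto
  ultimately show ?thesis unfolding lossG_def Let_def
    by (intro differentiable_add differentiable_sum ballI differentiable_power differentiable_diff
        differentiable_mult differentiable_const) auto
qed

lemma pdiff_rel:
  assumes lampos: "\<forall>l\<in>{1..L}. lam l > 0"
  shows "pdiff (lossF L d Y lam) W l i j
     = sc L lam l / (\<Prod>l=1..L. lam l) * pdiff (lossG L d Y lam) (Dm L lam W) l i j"
proof -
  define lm where "lm = (\<Prod>l=1..L. lam l)"
  have lm0: "lm > 0" unfolding lm_def using lampos by (intro prod_pos) auto
  define h where "h = (\<lambda>u. lossG L d Y lam (upd (Dm L lam W) l i j u))"
  define c where "c = sc L lam l"
  have hh: "h (c * t) = lm * lossF L d Y lam (upd W l i j t)" for t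
    unfolding h_def c_def lm_def by (simp add: Dm_upd[symmetric] lossG_D[OF lampos])
  have eq: "(\<lambda>t. lossF L d Y lam (upd W l i j t)) = (\<lambda>t. h (c * t) / lm)"
    using lm0 by (simp add: fun_eq_iff hh)
  have "DERIV h (c * 0) :> deriv h (c * 0)"
    unfolding h_def by (simp only: DERIV_deriv_iff_real_differentiable diffG)
  moreover have "DERIV (\<lambda>t. c * t) 0 :> c" by (auto intro!: derivative_eq_intros)
  ultimately have "DERIV (\<lambda>t. h (c * t)) 0 :> deriv h 0 * c" by (simp add: DERIV_chain2)
  then have "DERIV (\<lambda>t. h (c * t) / lm) 0 :> deriv h 0 * c / lm" by (rule DERIV_cdivide)
  then have "deriv (\<lambda>t. h (c * t) / lm) 0 = deriv h 0 * c / lm" by (rule DERIV_imp_deriv)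
  then show ?thesis unfolding pdiff_upd eq by (simp add: h_def c_def lm_def)
qed


lemma mprod_E2: "mprod d (upd (\<lambda>a b c. 0) l i j t) (Suc (Suc k)) a b = 0"
proof (induction k arbitrary: a b)
  case 0
  show ?case by (cases "l = 2") (auto simp: upd_def numeral_2_eq_2)
next
  case (Suc k)
  show ?case by (simp only: mprod.simps(2)[of d _ "Suc (Suc k)"] Suc.IH mult_zero_right sum.neutral_const)
qed

lemma zero_crit:
  assumes L2: "L \<ge> 2"
  shows "(\<lambda>a b c. 0) \<in> crit L d (lossF L d Y lam)"
proof -
  have qd: "DERIV (\<lambda>t. (upd (\<lambda>a b c. 0) l i j t a b c)\<^sup>2) 0 :> 0" for l i j a b c
    by (cases "a = l \<and> b = i \<and> c = j") (auto simp: upd_def intro!: derivative_eq_intros)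
  have sd: "DERIV (\<lambda>t. sqnorm L d l' (upd (\<lambda>a b c. 0) l i j t)) 0 :> 0" for l i j l'
  proof -
    have "DERIV (\<lambda>t. sqnorm L d l' (upd (\<lambda>a b c. 0) l i j t)) 0 :> (\<Sum>a\<in>{..<d l'}. \<Sum>b\<in>{..<d (l' - 1)}. 0)"
      unfolding sqnorm_def by (intro DERIV_sum qd)
    then show ?thesis by simp
  qed
  have bd: "DERIV (\<lambda>t. \<Sum>l'=1..L. lam l' * sqnorm L d l' (upd (\<lambda>a b c. 0) l i j t)) 0 :> (\<Sum>l'\<in>{1..L}. lam l' * 0)"
    for l i j by (intro DERIV_sum DERIV_cmult sd)
  have mp: "mprod d (upd (\<lambda>a b c. 0) l i j t) L a b = 0" for l i j t a b
  proof -
    have "L = Suc (Suc (L - 2))" using L2 by simp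
    then show ?thesis by (metis mprod_E2)
  qed
  have fe: "(\<lambda>t. lossF L d Y lam (upd (\<lambda>a b c. 0) l i j t)) =
      (\<lambda>t. (\<Sum>a<d L. \<Sum>b<d 0. (0 - Y a b)\<^sup>2) + (\<Sum>l'=1..L. lam l' * sqnorm L d l' (upd (\<lambda>a b c. 0) l i j t)))"
    for l i j unfolding lossF_def by (simp add: mp)
  have "DERIV (\<lambda>t. lossF L d Y lam (upd (\<lambda>a b c. 0) l i j t)) 0 :> 0 + (\<Sum>l'\<in>{1..L}. lam l' * 0)" for l i j
    unfolding fe by (intro DERIV_add DERIV_const bd)
  then have "pdiff (lossF L d Y lam) (\<lambda>a b c. 0) l i j = 0" for l i j
    unfolding pdiff_upd by (simp add: DERIV_imp_deriv)
  then show ?thesis unfolding crit_def valid_def by auto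
qed

lemma inv_rel: "p = s/lm*q \<Longrightarrow> s>0 \<Longrightarrow> lm>0 \<Longrightarrow> q = lm/s*p"
  for p s q lm :: real
proof -
  assume h: "p = s/lm*q" "s>0" "lm>0"
  have "(lm/s)*(s/lm) = 1" using h(2,3) by simp
  then show ?thesis unfolding h(1) by (metis mult.assoc mult_1)
qed

definition Dinv :: "nat \<Rightarrow> (nat \<Rightarrow> real) \<Rightarrow> tup \<Rightarrow> tup" where
  "Dinv L lam W = (\<lambda>a b c. W a b c / sc L lam a)"

lemma crit_G:
  assumes lampos: "\<forall>l\<in>{1..L}. lam l > 0"
  shows "crit L d (lossG L d Y lam) = Dm L lam ` crit L d (lossF L d Y lam)"
proof -
  have scp: "sc L lam a > 0" for a using sc_pos[OF lampos] .
  have lm0: "(\<Prod>l=1..L. lam l) > 0" using lampos by (intro prod_pos) auto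
  have rel: "pdiff (lossG L d Y lam) (Dm L lam W) l i j
       = (\<Prod>l=1..L. lam l) / sc L lam l * pdiff (lossF L d Y lam) W l i j" for W l i j
    using pdiff_rel[OF lampos, of d Y W l i j] scp[of l] lm0 by (rule inv_rel)
  show ?thesis
  proof
    show "crit L d (lossG L d Y lam) \<subseteq> Dm L lam ` crit L d (lossF L d Y lam)"
    proof
      fix V assume V: "V \<in> crit L d (lossG L d Y lam)"
      have DD: "Dm L lam (Dinv L lam V) = V"
      proof -
        have "sc L lam a \<noteq> 0" for a using scp[of a] by simp
        then show ?thesis by (simp add: Dm_def Dinv_def fun_eq_iff)
      qed
      have v1: "valid L d (Dinv L lam V)"
        using V unfolding crit_def valid_def Dinv_def by simp
      have v2: "pdiff (lossF L d Y lam) (Dinv L lam V) l i j = 0" if "(l,i,j) \<in> idx L d" for l i j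
      proof -
        have "pdiff (lossG L d Y lam) V l i j = 0" using V that unfolding crit_def by auto
        then show ?thesis by (simp only: pdiff_rel[OF lampos] DD mult_zero_right)
      qed
      have "Dinv L lam V \<in> crit L d (lossF L d Y lam)"
        unfolding crit_def using v1 v2 by auto
      then show "V \<in> Dm L lam ` crit L d (lossF L d Y lam)" using DD by force
    qed
  next
    show "Dm L lam ` crit L d (lossF L d Y lam) \<subseteq> crit L d (lossG L d Y lam)"
    proof
      fix V assume "V \<in> Dm L lam ` crit L d (lossF L d Y lam)"
      then obtain W where W: "W \<in> crit L d (lossF L d Y lam)" and VW: "V = Dm L lam W" by auto
      have v1: "valid L d V"
        using W unfolding VW crit_def valid_def Dm_def by auto
      have v2: "pdiff (lossG L d Y lam) V l i j = 0" if "(l,i,j) \<in> idx L d" for l i j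
      proof -
        have "pdiff (lossF L d Y lam) W l i j = 0" using W that unfolding crit_def by auto
        then show ?thesis unfolding VW by (simp only: rel mult_zero_right)
      qed
      show "V \<in> crit L d (lossG L d Y lam)" unfolding crit_def using v1 v2 by auto
    qed
  qed
qed

lemma tdist_Dm_le:
  assumes lampos: "\<forall>l\<in>{1..L}. lam l > 0" and M: "\<forall>l\<in>{1..L}. lam l \<le> M"
  shows "tdist L d (Dm L lam W) (Dm L lam V) \<le> sqrt M * tdist L d W V"
proof -
  have "(\<Sum>(l,i,j)\<in>idx L d. (Dm L lam W l i j - Dm L lam V l i j)\<^sup>2)
      \<le> (\<Sum>(l,i,j)\<in>idx L d. M * (W l i j - V l i j)\<^sup>2)"
  proof (rule sum_mono)
    fix x assume "x \<in> idx L d"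
    then obtain l i j where x: "x = (l,i,j)" "1 \<le> l" "l \<le> L" unfolding idx_def by auto
    have "(Dm L lam W l i j - Dm L lam V l i j)\<^sup>2 = lam l * (W l i j - V l i j)\<^sup>2"
    proof -
      have e1: "Dm L lam W l i j - Dm L lam V l i j = sc L lam l * (W l i j - V l i j)"
        by (simp add: Dm_def algebra_simps)
      have "lam l > 0" using x lampos by auto
      then have e2: "(sc L lam l)\<^sup>2 = lam l" using x by (simp add: sc_def)
      show ?thesis unfolding e1 power_mult_distrib e2 ..
    qed
    also have "\<dots> \<le> M * (W l i j - V l i j)\<^sup>2" using x M by (intro mult_right_mono) auto
    finally show "(case x of (l,i,j) \<Rightarrow> (Dm L lam W l i j - Dm L lam V l i j)\<^sup>2)
      \<le> (case x of (l,i,j) \<Rightarrow> M * (W l i j - V l i j)\<^sup>2)" using x by simp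
  qed
  also have "\<dots> = M * (\<Sum>(l,i,j)\<in>idx L d. (W l i j - V l i j)\<^sup>2)"
    by (simp add: sum_distrib_left case_prod_beta)
  finally show ?thesis unfolding tdist_def real_sqrt_mult[symmetric] by (rule real_sqrt_le_mono)
qed

lemma tdist_Dm_ge:
  assumes lampos: "\<forall>l\<in>{1..L}. lam l > 0" and m: "\<forall>l\<in>{1..L}. m \<le> lam l"
  shows "sqrt m * tdist L d W V \<le> tdist L d (Dm L lam W) (Dm L lam V)"
proof -
  have "m * (\<Sum>(l,i,j)\<in>idx L d. (W l i j - V l i j)\<^sup>2) = (\<Sum>(l,i,j)\<in>idx L d. m * (W l i j - V l i j)\<^sup>2)"
    by (simp add: sum_distrib_left case_prod_beta)
  also have "\<dots> \<le> (\<Sum>(l,i,j)\<in>idx L d. (Dm L lam W l i j - Dm L lam V l i j)\<^sup>2)"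
  proof (rule sum_mono)
    fix x assume "x \<in> idx L d"
    then obtain l i j where x: "x = (l,i,j)" "1 \<le> l" "l \<le> L" unfolding idx_def by auto
    have "(Dm L lam W l i j - Dm L lam V l i j)\<^sup>2 = lam l * (W l i j - V l i j)\<^sup>2"
    proof -
      have e1: "Dm L lam W l i j - Dm L lam V l i j = sc L lam l * (W l i j - V l i j)"
        by (simp add: Dm_def algebra_simps)
      have "lam l > 0" using x lampos by auto
      then have e2: "(sc L lam l)\<^sup>2 = lam l" using x by (simp add: sc_def)
      show ?thesis unfolding e1 power_mult_distrib e2 ..
    qed
    moreover have "m * (W l i j - V l i j)\<^sup>2 \<le> lam l * (W l i j - V l i j)\<^sup>2" using x m by (intro mult_right_mono) auto
    ultimately show "(case x of (l,i,j) \<Rightarrow> m * (W l i j - V l i j)\<^sup>2)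
      \<le> (case x of (l,i,j) \<Rightarrow> (Dm L lam W l i j - Dm L lam V l i j)\<^sup>2)" using x by simp
  qed
  finally show ?thesis unfolding tdist_def real_sqrt_mult[symmetric] by (rule real_sqrt_le_mono)
qed

lemma grad_bound:
  assumes lampos: "\<forall>l\<in>{1..L}. lam l > 0" and m: "\<forall>l\<in>{1..L}. m \<le> lam l" and m0: "m > 0"
  shows "gradnorm L d (lossG L d Y lam) (Dm L lam W)
     \<le> (\<Prod>l=1..L. lam l) / sqrt m * gradnorm L d (lossF L d Y lam) W"
proof -
  define lm where "lm = (\<Prod>l=1..L. lam l)"
  have lm0: "lm > 0" unfolding lm_def using lampos by (intro prod_pos) auto
  have scp: "sc L lam a > 0" for a using sc_pos[OF lampos] .
  have rel: "pdiff (lossG L d Y lam) (Dm L lam W) l i j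
       = lm / sc L lam l * pdiff (lossF L d Y lam) W l i j" for l i j
    using pdiff_rel[OF lampos, of d Y W l i j] scp[of l] lm0 unfolding lm_def by (rule inv_rel)
  have "(\<Sum>(l,i,j)\<in>idx L d. (pdiff (lossG L d Y lam) (Dm L lam W) l i j)\<^sup>2)
      \<le> (\<Sum>(l,i,j)\<in>idx L d. lm^2 / m * (pdiff (lossF L d Y lam) W l i j)\<^sup>2)"
  proof (rule sum_mono)
    fix x assume "x \<in> idx L d"
    then obtain l i j where x: "x = (l,i,j)" "1 \<le> l" "l \<le> L" unfolding idx_def by auto
    define p where "p = pdiff (lossF L d Y lam) W l i j"
    have ll: "lam l > 0" "m \<le> lam l" using x lampos m by auto
    have "(lm / sc L lam l * p)\<^sup>2 = lm^2 / lam l * p^2"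
      using x ll by (simp add: sc_def power_mult_distrib power_divide)
    also have "\<dots> \<le> lm^2 / m * p^2"
      using ll m0 by (intro mult_right_mono divide_left_mono) auto
    finally show "(case x of (l,i,j) \<Rightarrow> (pdiff (lossG L d Y lam) (Dm L lam W) l i j)\<^sup>2)
      \<le> (case x of (l,i,j) \<Rightarrow> lm^2 / m * (pdiff (lossF L d Y lam) W l i j)\<^sup>2)"
      using x by (simp add: rel p_def)
  qed
  also have "\<dots> = lm^2 / m * (\<Sum>(l,i,j)\<in>idx L d. (pdiff (lossF L d Y lam) W l i j)\<^sup>2)"
    by (simp add: sum_distrib_left case_prod_beta)
  finally have "gradnorm L d (lossG L d Y lam) (Dm L lam W) \<le> sqrt (lm^2 / m) * gradnorm L d (lossF L d Y lam) W"
    unfolding gradnorm_def real_sqrt_mult[symmetric] by (rule real_sqrt_le_mono)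
  moreover have "sqrt (lm^2 / m) = lm / sqrt m" using lm0 m0 by (simp add: real_sqrt_divide)
  ultimately show ?thesis unfolding lm_def by simp
qed

lemma aux_div: "r > 0 \<Longrightarrow> k*(l/r*G)/r = k*l/(r*r)*G" for r k l G :: real
  by (simp add: field_simps)

theorem lemma3p1:
  fixes L :: nat and d :: "nat \<Rightarrow> nat" and Y :: "nat \<Rightarrow> nat \<Rightarrow> real"
    and lam :: "nat \<Rightarrow> real" and eps kappa :: real
  assumes L2: "L \<ge> 2"
    and dpos: "\<forall>l\<le>L. d l > 0"
    and lampos: "\<forall>l\<in>{1..L}. lam l > 0"
    and eps: "eps > 0" and kappa: "kappa > 0"
    and EB: "\<forall>Z. valid L d Z \<longrightarrow>
               tdist_set L d Z (crit L d (lossG L d Y lam)) \<le> eps \<longrightarrow>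
               tdist_set L d Z (crit L d (lossG L d Y lam)) \<le> kappa * gradnorm L d (lossG L d Y lam) Z"
  shows "\<forall>W. valid L d W \<longrightarrow>
           tdist_set L d W (crit L d (lossF L d Y lam)) \<le> eps / sqrt (Max (lam ` {1..L})) \<longrightarrow>
           tdist_set L d W (crit L d (lossF L d Y lam))
             \<le> kappa * (\<Prod>l=1..L. lam l) / Min (lam ` {1..L}) * gradnorm L d (lossF L d Y lam) W"
proof (intro allI impI)
  fix W assume vW: "valid L d W"
  define S where "S = crit L d (lossF L d Y lam)"
  define M where "M = Max (lam ` {1..L})"
  define m where "m = Min (lam ` {1..L})"
  define lm where "lm = (\<Prod>l=1..L. lam l)"
  assume close: "tdist_set L d W S \<le> eps / sqrt M"
  have fin: "finite (lam ` {1..L})" and ne: "lam ` {1..L} \<noteq> {}" using L2 by auto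
  have Mge: "\<forall>l\<in>{1..L}. lam l \<le> M" unfolding M_def using fin by auto
  have mle: "\<forall>l\<in>{1..L}. m \<le> lam l" unfolding m_def using fin by auto
  have m0: "m > 0" unfolding m_def using fin ne lampos by (subst Min_gr_iff) auto
  have M0: "M > 0" using Mge mle m0 L2 by (meson atLeastAtMost_iff le_trans less_le_trans one_le_numeral order_refl)
  have Sne: "S \<noteq> {}" using zero_crit[OF L2] unfolding S_def by blast
  define f where "f V = tdist L d W V" for V
  define g where "g V = tdist L d (Dm L lam W) (Dm L lam V)" for V
  define dF where "dF = tdist_set L d W S"
  define dG where "dG = tdist_set L d (Dm L lam W) (crit L d (lossG L d Y lam))"
  have dF: "dF = Inf (f ` S)" unfolding dF_def tdist_set_def f_def ..
  have dG: "dG = Inf (g ` S)"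
    unfolding dG_def tdist_set_def g_def crit_G[OF lampos] S_def image_image ..
  have f0: "f V \<ge> 0" for V unfolding f_def tdist_def by (auto intro!: sum_nonneg)
  have g0: "g V \<ge> 0" for V unfolding g_def tdist_def by (auto intro!: sum_nonneg)
  have bf: "bdd_below (f ` S)" using f0 by (intro bdd_belowI[of _ 0]) auto
  have bg: "bdd_below (g ` S)" using g0 by (intro bdd_belowI[of _ 0]) auto
  have gle: "g V \<le> sqrt M * f V" for V unfolding g_def f_def by (rule tdist_Dm_le[OF lampos Mge])
  have gge: "sqrt m * f V \<le> g V" for V unfolding g_def f_def by (rule tdist_Dm_ge[OF lampos mle])
  have sM: "sqrt M > 0" using M0 by simp
  have sm: "sqrt m > 0" using m0 by simp
  have "dG / sqrt M \<le> dF"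
    unfolding dF
  proof (rule cInf_greatest)
    show "f ` S \<noteq> {}" using Sne by simp
    fix y assume "y \<in> f ` S"
    then obtain V where V: "V \<in> S" "y = f V" by auto
    have "dG \<le> g V" unfolding dG using V bg by (intro cInf_lower) auto
    also have "\<dots> \<le> sqrt M * f V" by (rule gle)
    finally show "dG / sqrt M \<le> y" using V sM by (simp add: divide_le_eq mult.commute)
  qed
  then have dGF: "dG \<le> sqrt M * dF" using sM by (simp add: divide_le_eq mult.commute)
  have dFG: "sqrt m * dF \<le> dG"
    unfolding dG
  proof (rule cInf_greatest)
    show "g ` S \<noteq> {}" using Sne by simp
    fix y assume "y \<in> g ` S"
    then obtain V where V: "V \<in> S" "y = g V" by auto
    have "dF \<le> f V" unfolding dF using V bf by (intro cInf_lower) auto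
    then have "sqrt m * dF \<le> sqrt m * f V" using sm by simp
    also have "\<dots> \<le> g V" by (rule gge)
    finally show "sqrt m * dF \<le> y" using V by simp
  qed
  have "dG \<le> eps"
  proof -
    have "sqrt M * dF \<le> sqrt M * (eps / sqrt M)"
      using close sM unfolding dF_def by (intro mult_left_mono) auto
    then show ?thesis using dGF sM by simp
  qed
  moreover have vD: "valid L d (Dm L lam W)" using vW unfolding valid_def Dm_def by simp
  ultimately have "dG \<le> kappa * gradnorm L d (lossG L d Y lam) (Dm L lam W)"
    using EB unfolding dG_def by blast
  also have "\<dots> \<le> kappa * (lm / sqrt m * gradnorm L d (lossF L d Y lam) W)"
    using grad_bound[OF lampos mle m0, of d Y W] kappa unfolding lm_def
    by (intro mult_left_mono) auto
  finally have "sqrt m * dF \<le> kappa * (lm / sqrt m * gradnorm L d (lossF L d Y lam) W)"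
    using dFG by linarith
  then have "dF \<le> kappa * (lm / sqrt m * gradnorm L d (lossF L d Y lam) W) / sqrt m"
    by (subst pos_le_divide_eq[OF sm]) (simp add: mult.commute)
  also have "\<dots> = kappa * lm / m * gradnorm L d (lossF L d Y lam) W"
    using aux_div[OF sm] m0 by simp
  finally show "tdist_set L d W S \<le> kappa * lm / m * gradnorm L d (lossF L d Y lam) W"
    unfolding dF_def .
qed

end
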